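(* Let $\vec k=(k_1,\dots,k_\ell)$ be a vector of positive integers and $\pi\in\mathcal D_{\vec k}$. Let $(t_1,\dots,t_\ell)$ be the first-row entries of $F=\eta_*(\pi)$. For each $2\le j\le\ell$, let $i$ be the index of the column of $F$ containing the entry $t_j-1$ and let $m_{ij}$ be the row index of $t_j-1$ in $F$. Then the area sequence $(a_1,\dots,a_\ell)$ of $\pi$ satisfies $a_1=0$ and $a_j=a_i+k_i-m_{ij}+1$ for $j\ge2$, and the depth labeling sequence $(d_1,\dots,d_\ell)$ of $\pi$ satisfies $d_1=0$ and $d_j=d_i+m_{ij}-1$ for $j\ge 2$.
   Context: $|\vec k|=k_1+\cdots+k_\ell$, $N=|\vec k|+\ell$. A $\vec k$-Dyck path is a word $\pi=\pi_1\cdots\pi_N$ containing the letters $S^{k_1},\dots,S^{k_\ell}$ exactly once each and in this order, together with $|\vec k|$ letters $W$, such that all starting ranks are nonnegative, where $r_1=0$, $r_{i+1}=r_i+k_j$ if $\pi_i=S^{k_j}$ and $r_{i+1}=r_i-1$ if $\pi_i=W$. $\mathcal D_{\vec k}$ is the set of such paths. The area sequence is $(a_1,\dots,a_\ell)$ where $a_j$ is the starting rank of the letter $S^{k_j}$. Filling algorithm $\eta_*$: in a tableau of $\ell$ top-justified columns, column $i$ having $k_i+1$ cells, place $1$ at the top of column 1; for $i=2,\dots,N$, call an entry active if it is currently the bottom entry of a column $i'$ not yet containing $k_{i'}+1$ entries; if $\pi_i=W$ place $i$ immediately below the largest active entry, otherwise place $i$ at the top of the first empty column. Ranking algorithm $\gamma_*$: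 column 1 of a tableau of the same shape gets ranks $0,1,\dots,k_1$ top to bottom; for $i\ge2$, if the top entry of column $i$ of $\eta_*(\pi)$ is $A+1$ and $A$ has rank $\alpha$, column $i$ gets ranks $\alpha,\alpha+1,\dots,\alpha+k_i$ top to bottom. The depth labeling sequence $(d_1,\dots,d_\ell)$ is the first row of the ranking tableau $\gamma_*(\eta_*(\pi))$. Rows are numbered from $1$ starting at the top. *)

theory Defs
  imports Main
begin

text \<open>Conventions: the vector k is a list (k!0 = k_1, ..., k!(l-1) = k_l).
  Letters: S j stands for the letter S^{k_{j+1}} (0-based index j), W for W.
  Positions in words, column indices and indices of sequences are 0-based
  in lists; entries of tableaux are the numbers 1..N as in the paper.\<close>

datatype letter = S nat | W

definition delta :: "nat list \<Rightarrow> letter \<Rightarrow> int" where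
  "delta k l = (case l of S j \<Rightarrow> int (k ! j) | W \<Rightarrow> -1)"

definition start_rank :: "nat list \<Rightarrow> letter list \<Rightarrow> nat \<Rightarrow> int" where
  "start_rank k \<pi> p = sum_list (map (delta k) (take p \<pi>))"

definition is_kdyck :: "nat list \<Rightarrow> letter list \<Rightarrow> bool" where
  "is_kdyck k \<pi> \<longleftrightarrow>
     filter (\<lambda>l. l \<noteq> W) \<pi> = map S [0..<length k] \<and>
     length (filter (\<lambda>l. l = W) \<pi>) = sum_list k \<and>
     (\<forall>p < length \<pi>. start_rank k \<pi> p \<ge> 0)"

definition area_seq :: "nat list \<Rightarrow> letter list \<Rightarrow> int list" where
  "area_seq k \<pi> =
     map (\<lambda>j. start_rank k \<pi> (THE p. p < length \<pi> \<and> \<pi> ! p = S j)) [0..<length k]"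

text \<open>Filling algorithm: a tableau is a list of columns, each column a list of
  entries from top to bottom. Column c has capacity k!c + 1.\<close>
definition active_cols :: "nat list \<Rightarrow> nat list list \<Rightarrow> nat set" where
  "active_cols k cols = {c. c < length cols \<and> cols ! c \<noteq> [] \<and> length (cols ! c) < k ! c + 1}"

definition fill_step :: "nat list \<Rightarrow> nat list list \<Rightarrow> nat \<Rightarrow> letter \<Rightarrow> nat list list" where
  "fill_step k cols i l =
     (if i = 1 then cols[0 := [1]]
      else (case l of
         W \<Rightarrow> (let m = Max ((\<lambda>c. last (cols ! c)) ` active_cols k cols);
                    c = (THE c. c \<in> active_cols k cols \<and> last (cols ! c) = m)
                in cols[c := cols ! c @ [i]])
       | S _ \<Rightarrow> (let c = (LEAST c. c < length cols \<and> cols ! c = [])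
                 in cols[c := [i]])))"

definition eta :: "nat list \<Rightarrow> letter list \<Rightarrow> nat list list" where
  "eta k \<pi> = foldl (\<lambda>cols (i, l). fill_step k cols i l) (replicate (length k) [])
                   (zip [1..<length \<pi> + 1] \<pi>)"

definition gamma :: "nat list \<Rightarrow> nat list list \<Rightarrow> nat list list" where
  "gamma k F = foldl (\<lambda>G c.
       G @ [(let A = hd (F ! c) - 1;
                 c' = (THE c'. c' < length F \<and> A \<in> set (F ! c'));
                 r = (THE r. r < length (F ! c') \<and> F ! c' ! r = A);
                 \<alpha> = G ! c' ! r
             in [\<alpha>..<\<alpha> + k ! c + 1])])
     [[0..<k ! 0 + 1]] [1..<length k]"

definition depth_seq :: "nat list \<Rightarrow> letter list \<Rightarrow> nat list" where
  "depth_seq k \<pi> = map hd (gamma k (eta k \<pi>))"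

end

theory Submission
  imports Defs
begin


lemma start_rank_0[simp]: "start_rank k p 0 = 0" by (simp add: start_rank_def)
lemma start_rank_Suc: "n < length p \<Longrightarrow> start_rank k p (Suc n) = start_rank k p n + delta k (p!n)"
  by (simp add: start_rank_def take_Suc_conv_app_nth)

definition cnt where "cnt p n = length (filter (\<lambda>l. l \<noteq> W) (take n p))"

lemma filter_take:
  assumes "is_kdyck k p"
  shows "filter (\<lambda>l. l \<noteq> W) (take n p) = map S [0..<cnt p n] \<and> cnt p n \<le> length k"
proof -
  let ?P = "\<lambda>l. l \<noteq> W"
  have "filter ?P p = filter ?P (take n p) @ filter ?P (drop n p)" by (metis append_take_drop_id filter_append)
  hence e0: "filter ?P (take n p) = take (cnt p n) (filter ?P p)" unfolding cnt_def by simp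
  have l0: "cnt p n \<le> length (filter ?P p)" unfolding cnt_def using \<open>filter ?P p = _\<close>
    by (metis le_add1 length_append)
  have e: "filter ?P (take n p) = take (cnt p n) (map S [0..<length k])" using e0 assms unfolding is_kdyck_def by simp
  have "cnt p n \<le> length k" using l0 assms unfolding is_kdyck_def by simp
  with e show ?thesis by (simp add: take_map min_def)
qed

lemma cnt_Suc: "n < length p \<Longrightarrow> cnt p (Suc n) = (if p!n = W then cnt p n else Suc (cnt p n))"
  by (simp add: cnt_def take_Suc_conv_app_nth)

lemma cnt_mono: "n \<le> m \<Longrightarrow> cnt p n \<le> cnt p m"
proof -
  assume "n \<le> m"
  then have "take m p = take n p @ take (m-n) (drop n p)" by (metis le_add_diff_inverse take_add)
  then show ?thesis unfolding cnt_def by simp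
qed

lemma S_index:
  assumes "is_kdyck k p" "n < length p" "p!n = S j"
  shows "j = cnt p n \<and> cnt p n < length k"
proof -
  have "filter (\<lambda>l. l \<noteq> W) (take (Suc n) p) = map S [0..<cnt p n] @ [S j]"
    using filter_take[OF assms(1), of n] assms(2,3) by (simp add: take_Suc_conv_app_nth)
  moreover have "filter (\<lambda>l. l \<noteq> W) (take (Suc n) p) = map S [0..<cnt p (Suc n)]" "cnt p (Suc n) \<le> length k"
    using filter_take[OF assms(1), of "Suc n"] by auto
  moreover have "cnt p (Suc n) = Suc (cnt p n)" using cnt_Suc[OF assms(2)] assms(3) by simp
  ultimately show ?thesis by simp
qed

lemma S_unique:
  assumes "is_kdyck k p" "n < length p" "p!n = S j" "m < length p" "p!m = S j"
  shows "n = m"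
proof (rule ccontr)
  assume "n \<noteq> m"
  have A: "\<And>n m. n < m \<Longrightarrow> n < length p \<Longrightarrow> m < length p \<Longrightarrow> p!n = S j \<Longrightarrow> p!m = S j \<Longrightarrow> False"
  proof -
    fix n m assume h: "n < m" "n < length p" "m < length p" "p!n = S j" "p!m = S j"
    have "cnt p (Suc n) \<le> cnt p m" using cnt_mono h(1) by simp
    moreover have "cnt p (Suc n) = Suc (cnt p n)" using cnt_Suc[OF h(2)] h(4) by simp
    ultimately show False using S_index[OF assms(1) h(2,4)] S_index[OF assms(1) h(3,5)] by simp
  qed
  show False using A assms \<open>n \<noteq> m\<close> by (metis linorder_neqE_nat)
qed

lemma sum_filter: "sum_list (map f xs) = sum_list (map f (filter P xs)) + sum_list (map f (filter (\<lambda>x. \<not> P x) xs))"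
  for f :: "'a \<Rightarrow> int"
  by (induction xs) auto

lemma rank_end: assumes "is_kdyck k p" shows "start_rank k p (length p) = 0"
proof -
  have "start_rank k p (length p) = sum_list (map (delta k) p)" by (simp add: start_rank_def)
  also have "\<dots> = sum_list (map (delta k) (filter (\<lambda>l. l \<noteq> W) p)) + sum_list (map (delta k) (filter (\<lambda>l. l = W) p))"
    using sum_filter[of "delta k" p "\<lambda>l. l \<noteq> W"] by simp
  also have "sum_list (map (delta k) (filter (\<lambda>l. l = W) p)) = - int (sum_list k)"
  proof -
    have "\<And>xs. sum_list (map (delta k) (filter (\<lambda>l. l = W) xs)) = - int (length (filter (\<lambda>l. l = W) xs))"
      subgoal for xs by (induction xs) (auto simp: delta_def)
      done
    then show ?thesis using assms unfolding is_kdyck_def by simp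
  qed
  also have "sum_list (map (delta k) (filter (\<lambda>l. l \<noteq> W) p)) = int (sum_list k)"
  proof -
    have "sum_list (map (delta k) (filter (\<lambda>l. l \<noteq> W) p)) = sum_list (map (\<lambda>j. int (k!j)) [0..<length k])"
      using assms unfolding is_kdyck_def by (simp add: delta_def comp_def)
    also have "\<dots> = int (sum_list (map (\<lambda>j. k!j) [0..<length k]))" by (simp add: sum_list_of_nat[symmetric] comp_def)
    finally show ?thesis by (simp add: map_nth)
  qed
  finally show ?thesis by simp
qed

lemma rank_nonneg: assumes "is_kdyck k p" "t \<le> length p" shows "0 \<le> start_rank k p t"
  using assms rank_end[OF assms(1)] unfolding is_kdyck_def
  by (metis le_neq_implies_less order.refl)

lemma first_letter: assumes "is_kdyck k p" "k \<noteq> []" shows "0 < length p \<and> p!0 = S 0"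
proof -
  have "filter (\<lambda>l. l \<noteq> W) p \<noteq> []" using assms unfolding is_kdyck_def by simp
  hence np: "0 < length p" by auto
  have "p!0 \<noteq> W"
  proof
    assume "p!0 = W"
    hence "start_rank k p 1 = -1" using start_rank_Suc[OF np, of k] by (simp add: delta_def)
    with rank_nonneg[OF assms(1), of 1] np show False by simp
  qed
  then obtain j where "p!0 = S j" by (cases "p!0") auto
  with S_index[OF assms(1) np this] show ?thesis using np by (simp add: cnt_def)
qed



definition st where "st k p n = foldl (\<lambda>cols (i, l). fill_step k cols i l) (replicate (length k) []) (zip [1..<n+1] (take n p))"

lemma st_Suc: "n < length p \<Longrightarrow> st k p (Suc n) = fill_step k (st k p n) (Suc n) (p!n)"
proof -
  assume n: "n < length p"
  have "zip [1..<Suc n + 1] (take (Suc n) p) = zip [1..<n+1] (take n p) @ [(Suc n, p!n)]"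
    using n by (simp add: take_Suc_conv_app_nth)
  then show ?thesis unfolding st_def by simp
qed

lemma eta_st: "eta k p = st k p (length p)" by (simp add: eta_def st_def)

definition inv where "inv k p n cols \<longleftrightarrow>
  length cols = length k \<and>
  (\<forall>c<length k. (cols!c \<noteq> []) = (c < cnt p n)) \<and>
  (\<forall>c<cnt p n. p!(hd(cols!c) - 1) = S c) \<and>
  (\<forall>c c'. c < c' \<and> c' < cnt p n \<longrightarrow> hd(cols!c) < hd(cols!c')) \<and>
  (\<forall>c<length k. sorted_wrt (<) (cols!c) \<and> length(cols!c) \<le> k!c+1 \<and> set(cols!c) \<subseteq> {1..n}) \<and>
  (\<forall>c<length k. \<forall>c'<length k. c \<noteq> c' \<longrightarrow> set(cols!c) \<inter> set(cols!c') = {}) \<and>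
  (\<forall>x\<in>{1..n}. \<exists>c<length k. x \<in> set(cols!c)) \<and>
  (\<forall>c<length k. \<forall>q<length(cols!c). start_rank k p (cols!c!q) = start_rank k p (hd(cols!c)-1) + int(k!c) - int q) \<and>
  (\<forall>c\<in>active_cols k cols. 0 \<le> start_rank k p (hd(cols!c)-1) \<and> start_rank k p (last(cols!c)) \<le> start_rank k p n) \<and>
  (\<forall>c\<in>active_cols k cols. \<forall>c'\<in>active_cols k cols. last(cols!c) < last(cols!c') \<longrightarrow> start_rank k p (last(cols!c)) \<le> start_rank k p (hd(cols!c')-1)) \<and>
  (\<forall>v. 0 < v \<and> v \<le> start_rank k p n \<longrightarrow> (\<exists>c\<in>active_cols k cols. start_rank k p (hd(cols!c)-1) < v \<and> v \<le> start_rank k p (last(cols!c))))"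

lemma inv_0: "inv k p 0 (replicate (length k) [])"
proof -
  have "active_cols k (replicate (length k) []) = {}" by (simp add: active_cols_def)
  then show ?thesis by (simp add: inv_def cnt_def)
qed

lemma active_lt: 
  assumes "inv k p n cols" "c \<in> active_cols k cols"
  shows "start_rank k p (hd(cols!c)-1) < start_rank k p (last(cols!c))"
proof -
  have c: "c < length k" "cols!c \<noteq> []" "length (cols!c) < k!c+1" using assms by (auto simp: inv_def active_cols_def)
  have "last (cols!c) = cols!c!(length (cols!c) - 1)" using c by (simp add: last_conv_nth)
  moreover have "start_rank k p (cols!c!(length (cols!c) - 1)) = start_rank k p (hd(cols!c)-1) + int(k!c) - int (length (cols!c) - 1)"
    using assms(1) c unfolding inv_def by simp
  moreover have "int (length (cols!c) - 1) < int (k!c)" using c by (cases "cols!c") auto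
  ultimately show ?thesis by simp
qed



lemma step_S:
  assumes dyck: "is_kdyck k p" and pos: "\<forall>x \<in> set k. x > 0"
    and I: "inv k p n cols" and n: "n < length p" and pn: "p!n = S j"
  shows "fill_step k cols (Suc n) (p!n) = cols[cnt p n := [Suc n]] \<and> inv k p (Suc n) (cols[cnt p n := [Suc n]])"
proof -
  let ?R = "start_rank k p"
  let ?s = "cnt p n"
  let ?new = "cols[?s := [Suc n]]"
  have js: "j = ?s" "?s < length k" using S_index[OF dyck n pn] by auto
  have len: "length cols = length k" using I by (simp add: inv_def)
  have ne: "\<And>c. c < length k \<Longrightarrow> (cols!c \<noteq> []) = (c < ?s)" using I by (simp add: inv_def)
  have hdS: "\<And>c. c < ?s \<Longrightarrow> p!(hd(cols!c) - 1) = S c" using I by (simp add: inv_def)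
  have hdlt: "\<And>c c'. c < c' \<Longrightarrow> c' < ?s \<Longrightarrow> hd(cols!c) < hd(cols!c')" using I by (simp add: inv_def)
  have srt: "\<And>c. c < length k \<Longrightarrow> sorted_wrt (<) (cols!c) \<and> length(cols!c) \<le> k!c+1 \<and> set(cols!c) \<subseteq> {1..n}"
    using I by (simp add: inv_def)
  have dis: "\<And>c c'. c < length k \<Longrightarrow> c' < length k \<Longrightarrow> c \<noteq> c' \<Longrightarrow> set(cols!c) \<inter> set(cols!c') = {}"
    using I unfolding inv_def by blast
  have cov: "\<And>x. x \<in> {1..n} \<Longrightarrow> \<exists>c<length k. x \<in> set(cols!c)" using I unfolding inv_def by blast
  have I2: "\<And>c q. c < length k \<Longrightarrow> q < length (cols!c) \<Longrightarrow> ?R (cols!c!q) = ?R (hd(cols!c)-1) + int(k!c) - int q"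
    using I unfolding inv_def by blast
  have T1: "\<And>c. c \<in> active_cols k cols \<Longrightarrow> 0 \<le> ?R (hd(cols!c)-1) \<and> ?R (last(cols!c)) \<le> ?R n"
    using I unfolding inv_def by blast
  have T2: "\<And>c c'. c \<in> active_cols k cols \<Longrightarrow> c' \<in> active_cols k cols \<Longrightarrow> last(cols!c) < last(cols!c') \<Longrightarrow> ?R (last(cols!c)) \<le> ?R (hd(cols!c')-1)"
    using I unfolding inv_def by blast
  have T3: "\<And>v. 0 < v \<Longrightarrow> v \<le> ?R n \<Longrightarrow> \<exists>c\<in>active_cols k cols. ?R (hd(cols!c)-1) < v \<and> v \<le> ?R (last(cols!c))"
    using I unfolding inv_def by blast
  have Rn: "?R (Suc n) = ?R n + int (k!?s)" using start_rank_Suc[OF n, of k] pn js by (simp add: delta_def)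
  have Rn0: "0 \<le> ?R n" using rank_nonneg[OF dyck, of n] n by simp
  have kpos: "0 < k!?s" using pos js(2) by simp
  have cntS: "cnt p (Suc n) = Suc ?s" using cnt_Suc[OF n] pn by simp
  have newc: "\<And>c. c < length k \<Longrightarrow> ?new!c = (if c = ?s then [Suc n] else cols!c)" using len by simp
  have fs: "fill_step k cols (Suc n) (p!n) = ?new"
  proof (cases "n = 0")
    case True
    then show ?thesis by (simp add: fill_step_def cnt_def)
  next
    case False
    have "(LEAST c. c < length cols \<and> cols ! c = []) = ?s"
    proof (rule Least_equality)
      show "?s < length cols \<and> cols ! ?s = []" using ne[of ?s] js len by simp
      show "\<And>y. y < length cols \<and> cols ! y = [] \<Longrightarrow> ?s \<le> y" using ne len by (metis not_le)
    qed
    then show ?thesis using False pn by (simp add: fill_step_def)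
  qed
  have nes: "\<And>c. c < ?s \<Longrightarrow> cols!c \<noteq> []" using ne js(2) by (metis less_trans)
  have act: "active_cols k ?new = insert ?s (active_cols k cols)"
  proof (rule set_eqI)
    fix c
    show "c \<in> active_cols k ?new \<longleftrightarrow> c \<in> insert ?s (active_cols k cols)"
    proof (cases "c = ?s")
      case True then show ?thesis using len newc kpos js(2) ne[of c] by (simp add: active_cols_def)
    next
      case False then show ?thesis using len newc[of c] by (simp add: active_cols_def)
    qed
  qed
  have sna: "?s \<notin> active_cols k cols" using ne[of ?s] js(2) by (auto simp: active_cols_def)
  have lastle: "\<And>c. c < length k \<Longrightarrow> cols!c \<noteq> [] \<Longrightarrow> last (cols!c) \<le> n \<and> 1 \<le> hd (cols!c)"
  proof -
    fix c assume "c < length k" "cols!c \<noteq> []"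
    moreover have "last (cols!c) \<in> set (cols!c)" "hd (cols!c) \<in> set (cols!c)" using \<open>cols!c \<noteq> []\<close> by auto
    ultimately show "last (cols!c) \<le> n \<and> 1 \<le> hd (cols!c)" using srt[of c] by fastforce
  qed
  have inS: "\<And>c. c < length k \<Longrightarrow> Suc n \<notin> set (cols!c)" using srt by fastforce
  have actc: "\<And>c. c \<in> active_cols k cols \<Longrightarrow> c < length k \<and> cols!c \<noteq> [] \<and> c \<noteq> ?s"
    using len sna by (auto simp: active_cols_def)
  have "inv k p (Suc n) ?new"
    unfolding inv_def
  proof (intro conjI allI impI ballI)
    show "length ?new = length k" using len by simp
  next
    fix c assume "c < length k" then show "(?new!c \<noteq> []) = (c < cnt p (Suc n))"
      using newc ne cntS by auto
  next
    fix c assume c: "c < cnt p (Suc n)"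
    show "p!(hd(?new!c) - 1) = S c"
    proof (cases "c = ?s")
      case True then show ?thesis using newc js pn by simp
    next
      case False then show ?thesis using c cntS hdS newc js by simp
    qed
  next
    fix c c' assume h: "c < c' \<and> c' < cnt p (Suc n)"
    show "hd(?new!c) < hd(?new!c')"
    proof (cases "c' = ?s")
      case True then show ?thesis using h newc js lastle[of c] ne[of c] srt[of c]
        by (auto simp: hd_in_set dest!: subsetD[of _ _ "hd (cols!c)"])
    next
      case False then show ?thesis using h newc js hdlt cntS by simp
    qed
  next
    fix c assume c: "c < length k"
    show "sorted_wrt (<) (?new!c)" using newc[OF c] srt[OF c] by auto
  next
    fix c assume c: "c < length k"
    show "length(?new!c) \<le> k!c+1" using newc[OF c] srt[OF c] by auto
  next
    fix c assume c: "c < length k"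
    show "set(?new!c) \<subseteq> {1..Suc n}" using newc[OF c] srt[OF c] by auto
  next
    fix c c' assume "c < length k" "c' < length k" "c \<noteq> c'"
    then show "set(?new!c) \<inter> set(?new!c') = {}" using newc dis inS by auto
  next
    fix x assume x: "x \<in> {1..Suc n}"
    show "\<exists>c<length k. x \<in> set(?new!c)"
    proof (cases "x = Suc n")
      case True then show ?thesis using newc js by auto
    next
      case False
      then have "x \<in> {1..n}" using x by auto
      then obtain c where "c < length k" "x \<in> set (cols!c)" using cov by blast
      moreover then have "c \<noteq> ?s" using ne[of ?s] js(2) by auto
      ultimately show ?thesis using newc by auto
    qed
  next
    fix c q assume c: "c < length k" and q: "q < length (?new!c)"
    show "?R (?new!c!q) = ?R (hd(?new!c)-1) + int(k!c) - int q"
    proof (cases "c = ?s")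
      case True then show ?thesis using q newc c Rn by simp
    next
      case False then show ?thesis using q newc c I2 by simp
    qed
  next
    fix c assume c: "c \<in> active_cols k ?new"
    show "0 \<le> ?R (hd(?new!c)-1)"
    proof (cases "c = ?s")
      case True then show ?thesis using newc js Rn Rn0 by simp
    next
      case False then show ?thesis using c act actc T1[of c] newc Rn by force
    qed
  next
    fix c assume c: "c \<in> active_cols k ?new"
    show "?R (last(?new!c)) \<le> ?R (Suc n)"
    proof (cases "c = ?s")
      case True then show ?thesis using newc js Rn Rn0 by simp
    next
      case False then show ?thesis using c act actc T1[of c] newc Rn by force
    qed
  next
    fix c c' assume c: "c \<in> active_cols k ?new" and c': "c' \<in> active_cols k ?new"
      and l: "last(?new!c) < last(?new!c')"
    show "?R (last(?new!c)) \<le> ?R (hd(?new!c')-1)"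
    proof (cases "c' = ?s")
      case True
      then have "c \<noteq> ?s" using l by auto
      then show ?thesis using True c act actc T1[of c] newc js by force
    next
      case False
      then have c'a: "c' \<in> active_cols k cols" using c' act by auto
      have "c \<noteq> ?s" using l False newc newc[OF js(2)] actc[OF c'a] lastle[of c'] by auto
      then show ?thesis using c'a c act actc T2[of c c'] newc l False by force
    qed
  next
    fix v assume v: "0 < v \<and> v \<le> ?R (Suc n)"
    show "\<exists>c\<in>active_cols k ?new. ?R (hd(?new!c)-1) < v \<and> v \<le> ?R (last(?new!c))"
    proof (cases "v \<le> ?R n")
      case True
      then obtain c where c: "c \<in> active_cols k cols" "?R (hd(cols!c)-1) < v \<and> v \<le> ?R (last(cols!c))"
        using T3 v by blast
      then show ?thesis using act actc[OF c(1)] newc by (intro bexI[of _ c]) auto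
    next
      case False
      then show ?thesis using act newc js v Rn by (intro bexI[of _ ?s]) auto
    qed
  qed
  with fs show ?thesis by simp
qed



lemma step_W:
  assumes dyck: "is_kdyck k p"
    and I: "inv k p n cols" and n: "n < length p" and pn: "p!n = W"
  shows "\<exists>c0. fill_step k cols (Suc n) (p!n) = cols[c0 := cols!c0 @ [Suc n]] \<and> inv k p (Suc n) (cols[c0 := cols!c0 @ [Suc n]])"
proof -
  let ?R = "start_rank k p"
  let ?s = "cnt p n"
  have len: "length cols = length k" using I by (simp add: inv_def)
  have ne: "\<And>c. c < length k \<Longrightarrow> (cols!c \<noteq> []) = (c < ?s)" using I by (simp add: inv_def)
  have hdS: "\<And>c. c < ?s \<Longrightarrow> p!(hd(cols!c) - 1) = S c" using I by (simp add: inv_def)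
  have hdlt: "\<And>c c'. c < c' \<Longrightarrow> c' < ?s \<Longrightarrow> hd(cols!c) < hd(cols!c')" using I by (simp add: inv_def)
  have srt: "\<And>c. c < length k \<Longrightarrow> sorted_wrt (<) (cols!c) \<and> length(cols!c) \<le> k!c+1 \<and> set(cols!c) \<subseteq> {1..n}"
    using I by (simp add: inv_def)
  have dis: "\<And>c c'. c < length k \<Longrightarrow> c' < length k \<Longrightarrow> c \<noteq> c' \<Longrightarrow> set(cols!c) \<inter> set(cols!c') = {}"
    using I unfolding inv_def by blast
  have cov: "\<And>x. x \<in> {1..n} \<Longrightarrow> \<exists>c<length k. x \<in> set(cols!c)" using I unfolding inv_def by blast
  have I2: "\<And>c q. c < length k \<Longrightarrow> q < length (cols!c) \<Longrightarrow> ?R (cols!c!q) = ?R (hd(cols!c)-1) + int(k!c) - int q"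
    using I unfolding inv_def by blast
  have T1: "\<And>c. c \<in> active_cols k cols \<Longrightarrow> 0 \<le> ?R (hd(cols!c)-1) \<and> ?R (last(cols!c)) \<le> ?R n"
    using I unfolding inv_def by blast
  have T2: "\<And>c c'. c \<in> active_cols k cols \<Longrightarrow> c' \<in> active_cols k cols \<Longrightarrow> last(cols!c) < last(cols!c') \<Longrightarrow> ?R (last(cols!c)) \<le> ?R (hd(cols!c')-1)"
    using I unfolding inv_def by blast
  have T3: "\<And>v. 0 < v \<Longrightarrow> v \<le> ?R n \<Longrightarrow> \<exists>c\<in>active_cols k cols. ?R (hd(cols!c)-1) < v \<and> v \<le> ?R (last(cols!c))"
    using I unfolding inv_def by blast
  have Rn: "?R (Suc n) = ?R n - 1" using start_rank_Suc[OF n, of k] pn by (simp add: delta_def)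
  have Rpos: "0 < ?R n" using rank_nonneg[OF dyck, of "Suc n"] n Rn by simp
  have actc: "\<And>c. c \<in> active_cols k cols \<Longrightarrow> c < length k \<and> cols!c \<noteq> [] \<and> length (cols!c) < k!c+1"
    using len by (auto simp: active_cols_def)
  have lastle: "\<And>c. c < length k \<Longrightarrow> cols!c \<noteq> [] \<Longrightarrow> last (cols!c) \<le> n \<and> 1 \<le> hd (cols!c)"
  proof -
    fix c assume "c < length k" "cols!c \<noteq> []"
    moreover have "last (cols!c) \<in> set (cols!c)" "hd (cols!c) \<in> set (cols!c)" using \<open>cols!c \<noteq> []\<close> by auto
    ultimately show "last (cols!c) \<le> n \<and> 1 \<le> hd (cols!c)" using srt[of c] by fastforce
  qed
  have inS: "\<And>c. c < length k \<Longrightarrow> Suc n \<notin> set (cols!c)" using srt by fastforce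
  have lastI2: "\<And>c. c < length k \<Longrightarrow> cols!c \<noteq> [] \<Longrightarrow> ?R (last (cols!c)) = ?R (hd(cols!c)-1) + int(k!c) - int (length (cols!c) - 1)"
    using I2 by (simp add: last_conv_nth)
  have lastinj: "\<And>c c'. c \<in> active_cols k cols \<Longrightarrow> c' \<in> active_cols k cols \<Longrightarrow> last (cols!c) = last (cols!c') \<Longrightarrow> c = c'"
  proof (rule ccontr)
    fix c c' assume h: "c \<in> active_cols k cols" "c' \<in> active_cols k cols" "last (cols!c) = last (cols!c')" "c \<noteq> c'"
    then have "last (cols!c) \<in> set (cols!c) \<inter> set (cols!c')" using actc by (metis IntI last_in_set)
    then show False using dis h actc by blast
  qed
  obtain c0 where c0: "c0 \<in> active_cols k cols" "?R (hd(cols!c0)-1) < ?R n" "?R n \<le> ?R (last(cols!c0))"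
    using T3[OF Rpos] by blast
  have Lc0: "?R (last(cols!c0)) = ?R n" using T1[OF c0(1)] c0(3) by simp
  have c0max: "\<And>c. c \<in> active_cols k cols \<Longrightarrow> last (cols!c) \<le> last (cols!c0)"
  proof (rule ccontr)
    fix c assume c: "c \<in> active_cols k cols" "\<not> last (cols!c) \<le> last (cols!c0)"
    then have "?R (last(cols!c0)) \<le> ?R (hd(cols!c)-1)" using T2[OF c0(1) c(1)] by simp
    moreover have "?R (hd(cols!c)-1) < ?R (last (cols!c))" using active_lt[OF I c(1)] .
    moreover have "?R (last (cols!c)) \<le> ?R n" using T1[OF c(1)] by simp
    ultimately show False using Lc0 by simp
  qed
  have c0lt: "\<And>c. c \<in> active_cols k cols \<Longrightarrow> c \<noteq> c0 \<Longrightarrow> last (cols!c) < last (cols!c0)"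
    using c0max lastinj c0(1) by (metis le_neq_implies_less)
  have c0d: "c0 < length k" "cols!c0 \<noteq> []" "length (cols!c0) < k!c0+1" using actc[OF c0(1)] by auto
  define new where "new = cols[c0 := cols!c0 @ [Suc n]]"
  have "hd (cols!c0) \<in> {1..n}" using srt[OF c0d(1)] c0d(2) hd_in_set by blast
  then have n0: "n \<noteq> 0" by simp
  have finA: "finite (active_cols k cols)" by (rule finite_subset[of _ "{..<length cols}"]) (auto simp: active_cols_def)
  have mx: "Max ((\<lambda>c. last (cols ! c)) ` active_cols k cols) = last (cols!c0)"
    by (rule Max_eqI) (use finA c0max c0(1) in auto)
  have th: "(THE c. c \<in> active_cols k cols \<and> last (cols ! c) = last (cols!c0)) = c0"
    by (rule the_equality) (use c0(1) lastinj in auto)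
  have fs: "fill_step k cols (Suc n) (p!n) = new"
    using n0 pn mx th unfolding new_def fill_step_def by (simp add: Let_def)
  have cntS: "cnt p (Suc n) = ?s" using cnt_Suc[OF n] pn by simp
  have newc: "\<And>c. c < length k \<Longrightarrow> new!c = (if c = c0 then cols!c0 @ [Suc n] else cols!c)" using len unfolding new_def by simp
  have hdnew: "\<And>c. c < length k \<Longrightarrow> hd (new!c) = hd (cols!c)" using newc c0d by simp
  have hdc0: "hd (cols!c0 @ [Suc n]) = hd (cols!c0)" using c0d(2) by simp
  have RL: "?R (Suc n) = ?R (hd(cols!c0)-1) + int(k!c0) - int (length (cols!c0))"
    using lastI2[OF c0d(1,2)] Lc0 Rn c0d(2) by (cases "cols!c0") auto
  have act: "\<And>c. c \<noteq> c0 \<Longrightarrow> c \<in> active_cols k new \<longleftrightarrow> c \<in> active_cols k cols"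
    using newc len unfolding active_cols_def new_def by auto
  have actc0: "c0 \<in> active_cols k new \<longleftrightarrow> length (cols!c0) < k!c0"
    using newc[OF c0d(1)] c0d len unfolding active_cols_def new_def by auto
  have "inv k p (Suc n) new"
    unfolding inv_def
  proof (intro conjI allI impI ballI)
    show "length new = length k" using len by (simp add: new_def)
  next
    fix c assume "c < length k" then show "(new!c \<noteq> []) = (c < cnt p (Suc n))"
      using newc ne cntS ne[OF c0d(1)] c0d(2) by auto
  next
    fix c assume c: "c < cnt p (Suc n)"
    have "cnt p n \<le> length k" using filter_take[OF dyck] by blast
    then have "c < length k" using c cntS by linarith
    then show "p!(hd(new!c) - 1) = S c" using c cntS hdS hdnew by simp
  next
    fix c c' assume h: "c < c' \<and> c' < cnt p (Suc n)"
    have "cnt p n \<le> length k" using filter_take[OF dyck] by blast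
    then have "c' < length k" using h cntS by linarith
    then show "hd(new!c) < hd(new!c')" using h hdnew hdlt cntS by simp
  next
    fix c assume c: "c < length k"
    show "sorted_wrt (<) (new!c)" using newc[OF c] srt[OF c] by (auto simp: sorted_wrt_append)
  next
    fix c assume c: "c < length k"
    show "length(new!c) \<le> k!c+1" using newc[OF c] srt[OF c] c0d by auto
  next
    fix c assume c: "c < length k"
    show "set(new!c) \<subseteq> {1..Suc n}" using newc[OF c] srt[OF c] by auto
  next
    fix c c' assume "c < length k" "c' < length k" "c \<noteq> c'"
    then show "set(new!c) \<inter> set(new!c') = {}" using newc dis inS by auto
  next
    fix x assume x: "x \<in> {1..Suc n}"
    show "\<exists>c<length k. x \<in> set(new!c)"
    proof (cases "x = Suc n")
      case True then show ?thesis using newc c0d by auto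
    next
      case False
      then have "x \<in> {1..n}" using x by auto
      then obtain c where "c < length k" "x \<in> set (cols!c)" using cov by blast
      then show ?thesis using newc by (intro exI[of _ c]) auto
    qed
  next
    fix c q assume c: "c < length k" and q: "q < length (new!c)"
    show "?R (new!c!q) = ?R (hd(new!c)-1) + int(k!c) - int q"
    proof (cases "c = c0")
      case True
      show ?thesis
      proof (cases "q = length (cols!c0)")
        case True then show ?thesis using `c = c0` newc c hdc0 RL by (simp add: nth_append)
      next
        case False then show ?thesis using `c = c0` q newc c hdc0 I2 by (simp add: nth_append)
      qed
    next
      case False then show ?thesis using q newc c I2 hdnew by simp
    qed
  next
    fix c assume c: "c \<in> active_cols k new"
    show "0 \<le> ?R (hd(new!c)-1)"
    proof (cases "c = c0")
      case True then show ?thesis using T1[OF c0(1)] hdnew c0d by simp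
    next
      case False
      then have ca: "c \<in> active_cols k cols" using c act by simp
      then show ?thesis using T1[OF ca] hdnew actc[OF ca] by simp
    qed
  next
    fix c assume c: "c \<in> active_cols k new"
    show "?R (last(new!c)) \<le> ?R (Suc n)"
    proof (cases "c = c0")
      case True then show ?thesis using newc c0d by simp
    next
      case False
      then have ca: "c \<in> active_cols k cols" using c act by simp
      have "?R (last(cols!c)) \<le> ?R (hd(cols!c0)-1)" using T2[OF ca c0(1) c0lt[OF ca False]] .
      then show ?thesis using newc actc[OF ca] False c0(2) Rn by simp
    qed
  next
    fix c c' assume c: "c \<in> active_cols k new" and c': "c' \<in> active_cols k new"
      and l: "last(new!c) < last(new!c')"
    show "?R (last(new!c)) \<le> ?R (hd(new!c')-1)"
    proof (cases "c = c0")
      case True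
      have "c' \<noteq> c0" using l True by auto
      then have ca': "c' \<in> active_cols k cols" using c' act by simp
      have "last (cols!c') \<le> n" using lastle actc[OF ca'] by simp
      then have False using l True newc[OF c0d(1)] newc actc[OF ca'] \<open>c' \<noteq> c0\<close> by simp
      then show ?thesis ..
    next
      case False
      then have ca: "c \<in> active_cols k cols" using c act by simp
      show ?thesis
      proof (cases "c' = c0")
        case True
        show ?thesis using T2[OF ca c0(1) c0lt[OF ca False]] True hdnew newc actc[OF ca] False c0d by simp
      next
        case F2: False
        then have ca': "c' \<in> active_cols k cols" using c' act by simp
        show ?thesis using T2[OF ca ca'] l newc actc[OF ca] actc[OF ca'] False F2 by simp
      qed
    qed
  next
    fix v assume v: "0 < v \<and> v \<le> ?R (Suc n)"
    then obtain c where c: "c \<in> active_cols k cols" "?R (hd(cols!c)-1) < v \<and> v \<le> ?R (last(cols!c))"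
      using T3 Rn by force
    show "\<exists>c\<in>active_cols k new. ?R (hd(new!c)-1) < v \<and> v \<le> ?R (last(new!c))"
    proof (cases "c = c0")
      case True
      have "c0 \<in> active_cols k new"
        using actc0 c0d RL v c True by (simp; linarith)
      then show ?thesis using True c v newc c0d by (intro bexI[of _ c0]) auto
    next
      case False
      then show ?thesis using c act newc actc by (intro bexI[of _ c]) auto
    qed
  qed
  with fs show ?thesis unfolding new_def by blast
qed



lemma inv_all: assumes dyck: "is_kdyck k p" and pos: "\<forall>x \<in> set k. x > 0"
  shows "n \<le> length p \<Longrightarrow> inv k p n (st k p n)"
proof (induction n)
  case 0 then show ?case using inv_0 by (simp add: st_def)
next
  case (Suc n)
  then have n: "n < length p" and I: "inv k p n (st k p n)" by auto
  show ?case
  proof (cases "p!n")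
    case (S j)
    then show ?thesis using step_S[OF dyck pos I n S] st_Suc[OF n] by simp
  next
    case W
    then show ?thesis using step_W[OF dyck I n W] st_Suc[OF n] by auto
  qed
qed

lemma hd_le: "sorted_wrt (<) xs \<Longrightarrow> x \<in> set xs \<Longrightarrow> hd xs \<le> (x::nat)"
  by (cases xs) auto

definition gstep :: "nat list \<Rightarrow> nat list list \<Rightarrow> nat list list \<Rightarrow> nat \<Rightarrow> nat list list" where
 "gstep k F = (\<lambda>G c.
       G @ [(let A = hd (F ! c) - 1;
                 c' = (THE c'. c' < length F \<and> A \<in> set (F ! c'));
                 r = (THE r. r < length (F ! c') \<and> F ! c' ! r = A);
                 \<alpha> = G ! c' ! r
             in [\<alpha>..<\<alpha> + k ! c + 1])])"

lemma gamma_gstep: "gamma k F = foldl (gstep k F) [[0..<k ! 0 + 1]] [1..<length k]"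
  unfolding gamma_def gstep_def by (rule refl)

definition GG where "GG k F n = foldl (gstep k F) [[0..<k ! 0 + 1]] [1..<n]"

lemma gamma_ind:
  assumes H: "\<And>c. 1 \<le> c \<Longrightarrow> c < length k \<Longrightarrow> (\<exists>c'<c. \<exists>r. r < length(F!c') \<and> r < k!c'+1 \<and> F!c'!r = hd(F!c)-1 \<and>
        (\<forall>c''. c'' < length F \<and> hd(F!c)-1 \<in> set(F!c'') \<longrightarrow> c'' = c') \<and>
        (\<forall>r'. r' < length(F!c') \<and> F!c'!r' = hd(F!c)-1 \<longrightarrow> r' = r))"
    and lF: "length F = length k"
  shows "1 \<le> n \<Longrightarrow> n \<le> length k \<Longrightarrow>
    length (GG k F n) = n \<and>
    (\<forall>c<n. GG k F n ! c = [hd (GG k F n ! c) ..< hd (GG k F n ! c) + k!c + 1]) \<and>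
    hd (GG k F n ! 0) = 0 \<and>
    (\<forall>c c' r. 1 \<le> c \<and> c < n \<and> c' < length F \<and> r < length (F!c') \<and> F!c'!r = hd(F!c)-1 \<longrightarrow>
       hd (GG k F n ! c) = hd (GG k F n ! c') + r)"
proof (induction n)
  case 0 then show ?case by simp
next
  case (Suc n)
  show ?case
  proof (cases "n = 0")
    case True
    have "[0..<k!0+1] = 0 # [1..<k!0+1]" by (simp add: upt_conv_Cons del: upt_Suc)
    then show ?thesis using True by (simp add: GG_def del: upt_Suc)
  next
    case False
    let ?G = "GG k F n"
    have nn: "1 \<le> n" "n \<le> length k" using False Suc.prems by auto
    note IH0 = Suc.IH[OF nn]
    have IH1: "length ?G = n" using IH0 by blast
    have IH2: "\<And>c. c<n \<Longrightarrow> ?G ! c = [hd (?G ! c) ..< hd (?G ! c) + k!c + 1]" using IH0 by blast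
    have IH3: "hd (?G ! 0) = 0" using IH0 by blast
    have IH4: "\<And>c c' r. 1 \<le> c \<Longrightarrow> c < n \<Longrightarrow> c' < length F \<Longrightarrow> r < length (F!c') \<Longrightarrow> F!c'!r = hd(F!c)-1 \<Longrightarrow>
       hd (?G ! c) = hd (?G ! c') + r"
      using IH0 by blast
    have nk: "n < length k" using Suc.prems by simp
    obtain c' r where cr0: "c' < n \<and> r < length(F!c') \<and> r < k!c'+1 \<and> F!c'!r = hd(F!n)-1 \<and>
        (\<forall>c''. c'' < length F \<and> hd(F!n)-1 \<in> set(F!c'') \<longrightarrow> c'' = c') \<and>
        (\<forall>r'. r' < length(F!c') \<and> F!c'!r' = hd(F!n)-1 \<longrightarrow> r' = r)"
      using H[OF nn(1) nk] by (elim exE conjE) (rule that; intro conjI; assumption)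
    have cr: "c' < n" "r < length(F!c')" "r < k!c'+1" "F!c'!r = hd(F!n)-1"
        "\<And>c''. c'' < length F \<Longrightarrow> hd(F!n)-1 \<in> set(F!c'') \<Longrightarrow> c'' = c'"
        "\<And>r'. r' < length(F!c') \<Longrightarrow> F!c'!r' = hd(F!n)-1 \<Longrightarrow> r' = r"
      using cr0 by auto
    have c'F: "c' < length F" using cr(1) nk lF by simp
    have t1: "(THE c''. c'' < length F \<and> hd (F!n) - 1 \<in> set (F ! c'')) = c'"
    proof (rule the_equality)
      show "c' < length F \<and> hd (F ! n) - 1 \<in> set (F ! c')" using c'F cr(2,4) nth_mem by metis
      show "\<And>c''. c'' < length F \<and> hd (F ! n) - 1 \<in> set (F ! c'') \<Longrightarrow> c'' = c'" using cr(5) by blast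
    qed
    have t2: "(THE r'. r' < length (F ! c') \<and> F ! c' ! r' = hd (F!n) - 1) = r"
      by (rule the_equality) (use cr(2,4,6) in blast)+
    define \<alpha> where "\<alpha> = ?G ! c' ! r"
    have al: "\<alpha> = hd (?G ! c') + r"
    proof -
      obtain h where h: "?G ! c' = [h..<h + k!c' + 1]" using IH2[OF cr(1)] by blast
      show ?thesis unfolding \<alpha>_def h using cr(3) by (simp del: upt_Suc)
    qed
    have G': "GG k F (Suc n) = ?G @ [[\<alpha>..<\<alpha> + k!n + 1]]"
    proof -
      have "[1..<Suc n] = [1..<n] @ [n]" using False by simp
      then have "GG k F (Suc n) = gstep k F ?G n" unfolding GG_def by simp
      also have "\<dots> = ?G @ [[\<alpha>..<\<alpha> + k!n + 1]]"
        unfolding gstep_def Let_def t1 t2 \<alpha>_def by (rule refl)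
      finally show ?thesis .
    qed
    have hda: "hd [\<alpha>..<\<alpha> + k!n + 1] = \<alpha>" by (rule hd_upt) simp
    show ?thesis unfolding G'
    proof (intro conjI allI impI)
      show "length (?G @ [[\<alpha>..<\<alpha> + k!n + 1]]) = Suc n" using IH1 by simp
    next
      fix c assume "c < Suc n"
      show "(?G @ [[\<alpha>..<\<alpha> + k!n + 1]]) ! c = [hd ((?G @ [[\<alpha>..<\<alpha> + k!n + 1]]) ! c)..<hd ((?G @ [[\<alpha>..<\<alpha> + k!n + 1]]) ! c) + k ! c + 1]"
      proof (cases "c = n")
        case True
        then show ?thesis using IH1 hda by (simp add: nth_append del: upt_Suc)
      next
        case False
        then have "c < n" using \<open>c < Suc n\<close> by simp
        then show ?thesis using IH1 IH2[of c] by (simp add: nth_append del: upt_Suc)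
      qed
    next
      show "hd ((?G @ [[\<alpha>..<\<alpha> + k!n + 1]]) ! 0) = 0" using IH1 IH3 nn by (simp add: nth_append del: upt_Suc)
    next
      fix c c'' r'' assume h: "1 \<le> c \<and> c < Suc n \<and> c'' < length F \<and> r'' < length (F ! c'') \<and> F ! c'' ! r'' = hd (F ! c) - 1"
      show "hd ((?G @ [[\<alpha>..<\<alpha> + k!n + 1]]) ! c) = hd ((?G @ [[\<alpha>..<\<alpha> + k!n + 1]]) ! c'') + r''"
      proof (cases "c = n")
        case True
        have "hd(F!n)-1 \<in> set(F!c'')" using h True nth_mem by metis
        then have "c'' = c'" using cr(5)[of c''] h by blast
        moreover then have "r'' = r" using cr(6) h True by blast
        ultimately show ?thesis using True IH1 cr(1) al hda by (simp add: nth_append del: upt_Suc)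
      next
        case F: False
        have c1: "1 \<le> c" "c < length k" using h nk F by auto
        obtain c3 r3 where cr3: "c3 < c \<and> r3 < length(F!c3) \<and> r3 < k!c3+1 \<and> F!c3!r3 = hd(F!c)-1 \<and>
          (\<forall>c''. c'' < length F \<and> hd(F!c)-1 \<in> set(F!c'') \<longrightarrow> c'' = c3) \<and>
          (\<forall>r'. r' < length(F!c3) \<and> F!c3!r' = hd(F!c)-1 \<longrightarrow> r' = r3)"
          using H[OF c1] by (elim exE conjE) (rule that; intro conjI; assumption)
        then have "c3 < c" "\<And>c4. c4 < length F \<Longrightarrow> hd(F!c)-1 \<in> set(F!c4) \<Longrightarrow> c4 = c3" by auto
        moreover have "hd(F!c)-1 \<in> set(F!c'')" using h nth_mem by metis
        ultimately have "c'' < c" using h by blast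
        then show ?thesis using IH1 IH4[of c c'' r''] h F by (simp add: nth_append del: upt_Suc)
      qed
    qed
  qed
qed



theorem lemma4p13:
  fixes k :: "nat list" and \<pi> :: "letter list"
  assumes pos: "\<forall>x \<in> set k. x > 0"
    and ne: "k \<noteq> []"
    and dyck: "is_kdyck k \<pi>"
  defines "F \<equiv> eta k \<pi>"
    and "a \<equiv> area_seq k \<pi>"
    and "d \<equiv> depth_seq k \<pi>"
  shows "a ! 0 = 0 \<and> d ! 0 = 0 \<and>
    (\<forall>j. 1 \<le> j \<and> j < length k \<longrightarrow>
       (\<exists>i < length k. hd (F ! j) - 1 \<in> set (F ! i)) \<and>
       (\<forall>i m. i < length k \<and> 1 \<le> m \<and> m \<le> length (F ! i) \<and>
              F ! i ! (m - 1) = hd (F ! j) - 1 \<longrightarrow>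
          a ! j = a ! i + int (k ! i) - int m + 1 \<and>
          d ! j = d ! i + m - 1))"
proof -
  let ?R = "start_rank k \<pi>"
  let ?N = "length \<pi>"
  have I: "inv k \<pi> ?N F" unfolding F_def eta_st using inv_all[OF dyck pos] by simp
  have cntN: "cnt \<pi> ?N = length k"
  proof -
    have "map S [0..<cnt \<pi> ?N] = map S [0..<length k]"
      using filter_take[OF dyck, of ?N] dyck unfolding is_kdyck_def by simp
    then show ?thesis by (metis length_map length_upt minus_nat.diff_0)
  qed
  have len: "length F = length k" using I by (simp add: inv_def)
  have Fne: "\<And>c. c < length k \<Longrightarrow> F!c \<noteq> []" using I cntN by (simp add: inv_def)
  have hdS: "\<And>c. c < length k \<Longrightarrow> \<pi>!(hd(F!c) - 1) = S c" using I cntN by (simp add: inv_def)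
  have hdlt: "\<And>c c'. c < c' \<Longrightarrow> c' < length k \<Longrightarrow> hd(F!c) < hd(F!c')" using I cntN by (simp add: inv_def)
  have srt: "\<And>c. c < length k \<Longrightarrow> sorted_wrt (<) (F!c) \<and> length(F!c) \<le> k!c+1 \<and> set(F!c) \<subseteq> {1..?N}"
    using I by (simp add: inv_def)
  have dis: "\<And>c c'. c < length k \<Longrightarrow> c' < length k \<Longrightarrow> c \<noteq> c' \<Longrightarrow> set(F!c) \<inter> set(F!c') = {}"
    using I unfolding inv_def by blast
  have cov: "\<And>x. x \<in> {1..?N} \<Longrightarrow> \<exists>c<length k. x \<in> set(F!c)" using I unfolding inv_def by blast
  have I2: "\<And>c q. c < length k \<Longrightarrow> q < length (F!c) \<Longrightarrow> ?R (F!c!q) = ?R (hd(F!c)-1) + int(k!c) - int q"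
    using I unfolding inv_def by blast
  have hdr: "\<And>c. c < length k \<Longrightarrow> 1 \<le> hd (F!c) \<and> hd (F!c) \<le> ?N"
  proof -
    fix c assume c: "c < length k"
    have "hd (F!c) \<in> set (F!c)" using Fne[OF c] by simp
    then show "1 \<le> hd (F!c) \<and> hd (F!c) \<le> ?N" using srt[OF c] by auto
  qed
  have l0: "0 < length k" using ne by simp
  have fl: "0 < ?N \<and> \<pi>!0 = S 0" using first_letter[OF dyck ne] .
  have areaj: "\<And>j. j < length k \<Longrightarrow> a!j = ?R (hd(F!j)-1)"
  proof -
    fix j assume j: "j < length k"
    have "(THE p. p < ?N \<and> \<pi> ! p = S j) = hd(F!j)-1"
    proof (rule the_equality)
      show "hd (F ! j) - 1 < ?N \<and> \<pi> ! (hd (F ! j) - 1) = S j" using hdr[OF j] hdS[OF j] by auto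
      fix p assume p: "p < ?N \<and> \<pi> ! p = S j"
      have "hd(F!j) - 1 < ?N" using hdr[OF j] by linarith
      then show "p = hd (F ! j) - 1" using S_unique[OF dyck, of p j "hd(F!j) - 1"] p hdS[OF j] by blast
    qed
    then show "a!j = ?R (hd(F!j)-1)" unfolding a_def area_seq_def using j by simp
  qed
  have hd0: "hd (F!0) - 1 = 0"
  proof -
    have "hd(F!0) - 1 < ?N" using hdr[OF l0] by linarith
    then show ?thesis using S_unique[OF dyck, of "hd (F!0) - 1" 0 0] hdS[OF l0] fl by blast
  qed
  have a0: "a!0 = 0" using areaj[OF l0] hd0 by simp
  have H: "\<And>c. 1 \<le> c \<Longrightarrow> c < length k \<Longrightarrow> (\<exists>c'<c. \<exists>r. r < length(F!c') \<and> r < k!c'+1 \<and> F!c'!r = hd(F!c)-1 \<and>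
        (\<forall>c''. c'' < length F \<and> hd(F!c)-1 \<in> set(F!c'') \<longrightarrow> c'' = c') \<and>
        (\<forall>r'. r' < length(F!c') \<and> F!c'!r' = hd(F!c)-1 \<longrightarrow> r' = r))"
  proof -
    fix c assume c: "1 \<le> c" "c < length k"
    have "hd (F!0) < hd (F!c)" using hdlt[of 0 c] c by simp
    then have "hd(F!c) - 1 \<in> {1..?N}" using hdr[OF l0] hdr[OF c(2)] by auto
    then obtain i where i: "i < length k" "hd(F!c) - 1 \<in> set (F!i)" using cov by blast
    then obtain r where r: "r < length (F!i)" "F!i!r = hd(F!c) - 1" using i(2) by (auto simp: in_set_conv_nth)
    have ic: "i < c"
    proof (rule ccontr)
      assume "\<not> i < c"
      then consider "i = c" | "c < i" by linarith
      then show False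
      proof cases
        case 1
        then have "hd (F!c) \<le> hd(F!c) - 1" using hd_le[of "F!c"] srt[OF c(2)] i by blast
        then show False using hdr[OF c(2)] by arith
      next
        case 2
        then have "hd (F!c) < hd (F!i)" using hdlt i by simp
        moreover have "hd (F!i) \<le> hd(F!c) - 1" using hd_le[of "F!i"] srt[OF i(1)] i by blast
        ultimately show False by simp
      qed
    qed
    have rk: "r < k!i+1" using r srt[OF i(1)] by linarith
    have U1: "\<forall>c''. c'' < length F \<and> hd(F!c)-1 \<in> set(F!c'') \<longrightarrow> c'' = i"
    proof (intro allI impI)
      fix c'' assume h2: "c'' < length F \<and> hd(F!c)-1 \<in> set(F!c'')"
      show "c'' = i"
      proof (rule ccontr)
        assume "c'' \<noteq> i"
        then have "set(F!c'') \<inter> set(F!i) = {}" using dis[of c'' i] h2 len i(1) by simp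
        then show False using h2 i(2) by blast
      qed
    qed
    have U2: "\<forall>r'. r' < length(F!i) \<and> F!i!r' = hd(F!c)-1 \<longrightarrow> r' = r"
    proof (intro allI impI)
      fix r' assume "r' < length(F!i) \<and> F!i!r' = hd(F!c)-1"
      moreover have "distinct (F!i)" using srt[OF i(1)] strict_sorted_iff by blast
      ultimately show "r' = r" using r nth_eq_iff_index_eq[of "F!i" r' r] by simp
    qed
    have P: "i < c" "r < length(F!i) \<and> r < k!i+1 \<and> F!i!r = hd(F!c)-1 \<and>
        (\<forall>c''. c'' < length F \<and> hd(F!c)-1 \<in> set(F!c'') \<longrightarrow> c'' = i) \<and>
        (\<forall>r'. r' < length(F!i) \<and> F!i!r' = hd(F!c)-1 \<longrightarrow> r' = r)"
      by (intro conjI ic r rk U1 U2)+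
    show "\<exists>c'<c. \<exists>r. r < length(F!c') \<and> r < k!c'+1 \<and> F!c'!r = hd(F!c)-1 \<and>
        (\<forall>c''. c'' < length F \<and> hd(F!c)-1 \<in> set(F!c'') \<longrightarrow> c'' = c') \<and>
        (\<forall>r'. r' < length(F!c') \<and> F!c'!r' = hd(F!c)-1 \<longrightarrow> r' = r)"
      apply (rule exI[of _ i])
      apply (rule conjI[OF P(1)])
      apply (rule exI[of _ r])
      by (rule P(2))
  qed
  have GI: "length (GG k F (length k)) = length k \<and>
    (\<forall>c<length k. GG k F (length k) ! c = [hd (GG k F (length k) ! c) ..< hd (GG k F (length k) ! c) + k!c + 1]) \<and>
    hd (GG k F (length k) ! 0) = 0 \<and>
    (\<forall>c c' r. 1 \<le> c \<and> c < length k \<and> c' < length F \<and> r < length (F!c') \<and> F!c'!r = hd(F!c)-1 \<longrightarrow>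
       hd (GG k F (length k) ! c) = hd (GG k F (length k) ! c') + r)"
  proof -
    have "1 \<le> length k" using l0 by linarith
    from gamma_ind[OF H len this order.refl] show ?thesis .
  qed
  have GI1: "length (GG k F (length k)) = length k" using GI by blast
  have GI3: "hd (GG k F (length k) ! 0) = 0" using GI by blast
  have GI4: "\<And>c c' r. 1 \<le> c \<Longrightarrow> c < length k \<Longrightarrow> c' < length F \<Longrightarrow> r < length (F!c') \<Longrightarrow> F!c'!r = hd(F!c)-1 \<Longrightarrow>
       hd (GG k F (length k) ! c) = hd (GG k F (length k) ! c') + r" using GI by blast
  have dG: "\<And>j. j < length k \<Longrightarrow> d!j = hd (GG k F (length k) ! j)"
    using GI1 unfolding d_def depth_seq_def gamma_gstep GG_def F_def[symmetric] by simp
  have d0: "d!0 = 0" using dG[OF l0] GI3 by simp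
  show ?thesis
  proof (intro conjI allI impI)
    show "a!0 = 0" by (rule a0)
    show "d!0 = 0" by (rule d0)
  next
    fix j assume j: "1 \<le> j \<and> j < length k"
    obtain c' r where "c' < j" "r < length(F!c')" "F!c'!r = hd(F!j)-1"
      using H[of j] j by blast
    then show "\<exists>i < length k. hd (F ! j) - 1 \<in> set (F ! i)"
      using j nth_mem[of r "F!c'"] by (intro exI[of _ c']) auto
  next
    fix j i m assume j: "1 \<le> j \<and> j < length k"
      and h: "i < length k \<and> 1 \<le> m \<and> m \<le> length (F ! i) \<and> F ! i ! (m - 1) = hd (F ! j) - 1"
    have "a!j = ?R (F!i!(m-1))" using areaj j h by simp
    also have "\<dots> = ?R (hd(F!i)-1) + int(k!i) - int (m-1)"
    proof -
      have "m - 1 < length (F!i)" using h by arith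
      then show ?thesis using I2[of i "m-1"] h by blast
    qed
    finally show "a ! j = a ! i + int (k ! i) - int m + 1" using areaj[of i] h by simp
  next
    fix j i m assume j: "1 \<le> j \<and> j < length k"
      and h: "i < length k \<and> 1 \<le> m \<and> m \<le> length (F ! i) \<and> F ! i ! (m - 1) = hd (F ! j) - 1"
    have "hd (GG k F (length k) ! j) = hd (GG k F (length k) ! i) + (m - 1)"
    proof -
      have "m - 1 < length (F!i)" using h by arith
      then show ?thesis using GI4[of j i "m-1"] j h len by simp
    qed
    then show "d ! j = d ! i + m - 1" using dG j h by simp
  qed
qed

end
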